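(* Let $V=\mathbb{C}^n$ be the defining representation of $GL_n(\mathbb{C})$, restricted to $T\rtimes S_n$, and let $k\ge 0$. Let $A_k^n$ be the set of $k$-tuples of nonnegative integers $(a_1,\dots,a_k)$ with $a_1+2a_2+\dots+ka_k=k$ and $a_1+a_2+\dots+a_k\le n$. Then as representations of $T\rtimes S_n$, $$\mathrm{Sym}^k(V)\cong\bigoplus_{(a_1,\dots,a_k)\in A_k^n}\tilde{M}((a_1),(a_2),\dots,(a_k)),$$ where $(a)$ denotes the one-row partition with $a$ boxes (the empty partition if $a=0$).
   Context: Let $T\subset GL_n(\mathbb{C})$ be the diagonal torus, $S_n$ the permutation matrices, and $T\rtimes S_n\cong\mathbb{C}^\times\wr S_n$ the monomial matrices. For a partition $\lambda$ of $r$ and integer $k$, $S^{\lambda,k}$ is the representation of $\mathbb{C}^\times\wr S_r$ on the Specht module $S^\lambda$ with each copy of $\mathbb{C}^\times$ acting by $z\mapsto z^k$. For a composition $\nu=(\nu_1,\dots,\nu_\ell)$ of $n$ and integers $\mathbf{w}$, $M(\nu,\mathbf{w}):=\mathrm{Ind}_{(\mathbb{C}^\times\wr S_{\nu_1})\times\dots\times(\mathbb{C}^\times\wr S_{\nu_\ell})}^{\mathbb{C}^\times\wr S_n}(S^{(\nu_1),w_1}\otimes\dots\otimes S^{(\nu_\ell),w_\ell})$ (block-diagonal subgroup). For partitions $\lambda^1,\dots,\lambda^j$, $\lambda^i=(\lambda^i_1,\dots,\lambda^i_{\ell_i})$, of total size $m\le n$, $\tilde{M}(\lambda^1,\dots,\lambda^j):=M((n-m,\lambda^1_1,\dots,\lambda^1_{\ell_1},\dots,\lambda^j_1,\dots,\lambda^j_{\ell_j}),(0,1,\dots,1,\dots,j,\dots,j))$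 with $\ell_i$ entries equal to $i$ (the part $n-m$ omitted if zero). *)

theory Defs
  imports Complex_Main "HOL-Combinatorics.Permutations" "HOL-Library.Multiset"
begin

text \<open>An element (t, sigma) stands for the monomial matrix diag(t) * P_sigma, where
  P_sigma e_j = e_(sigma j); coordinates are indexed by 0..n-1.\<close>

type_synonym mon = "(nat \<Rightarrow> complex) \<times> (nat \<Rightarrow> nat)"

definition mon_grp :: "nat \<Rightarrow> mon set" where
  "mon_grp n = {(t, \<sigma>). (\<forall>j<n. t j \<noteq> 0) \<and> (\<forall>j\<ge>n. t j = 1) \<and> \<sigma> permutes {..<n}}"

definition mon_mult :: "mon \<Rightarrow> mon \<Rightarrow> mon" where
  "mon_mult g h = ((\<lambda>j. fst g j * fst h (inv (snd g) j)), snd g \<circ> snd h)"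

definition mon_mat :: "mon \<Rightarrow> nat \<Rightarrow> nat \<Rightarrow> complex" where
  "mon_mat g i j = (if i = snd g j then fst g i else 0)"

definition rep_iso ::
  "'g set \<Rightarrow> ('x \<Rightarrow> complex) set \<Rightarrow> ('g \<Rightarrow> ('x \<Rightarrow> complex) \<Rightarrow> ('x \<Rightarrow> complex))
     \<Rightarrow> ('y \<Rightarrow> complex) set \<Rightarrow> ('g \<Rightarrow> ('y \<Rightarrow> complex) \<Rightarrow> ('y \<Rightarrow> complex)) \<Rightarrow> bool" where
  "rep_iso G W1 A1 W2 A2 \<longleftrightarrow>
     (\<exists>\<phi>. bij_betw \<phi> W1 W2 \<and>
        (\<forall>x\<in>W1. \<forall>y\<in>W1. \<phi> (\<lambda>i. x i + y i) = (\<lambda>i. \<phi> x i + \<phi> y i)) \<and>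
        (\<forall>x\<in>W1. \<forall>c. \<phi> (\<lambda>i. c * x i) = (\<lambda>i. c * \<phi> x i)) \<and>
        (\<forall>g\<in>G. \<forall>x\<in>W1. \<phi> (A1 g x) = A2 g (\<phi> x)))"

subsection \<open>Symmetric power of the defining representation (as symmetric tensors)\<close>

definition idx_lists :: "nat \<Rightarrow> nat \<Rightarrow> nat list set" where
  "idx_lists n k = {js. length js = k \<and> set js \<subseteq> {..<n}}"

definition sym_space :: "nat \<Rightarrow> nat \<Rightarrow> (nat list \<Rightarrow> complex) set" where
  "sym_space n k = {T. (\<forall>is. is \<notin> idx_lists n k \<longrightarrow> T is = 0) \<and>
                       (\<forall>is js. mset is = mset js \<longrightarrow> T is = T js)}"

definition sym_act :: "nat \<Rightarrow> nat \<Rightarrow> mon \<Rightarrow> (nat list \<Rightarrow> complex) \<Rightarrow> (nat list \<Rightarrow> complex)" where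
  "sym_act n k g T = (\<lambda>is. if is \<in> idx_lists n k then
       (\<Sum>js\<in>idx_lists n k. (\<Prod>l<k. mon_mat g (is ! l) (js ! l)) * T js) else 0)"

text \<open>Ind_H^G W = {f : G -> W | f(h g) = h . f(g) for h in H}, (g' . f)(g) = f(g g').
  A function G -> W is encoded as f :: 'g * 'y => complex, vanishing off G.\<close>

definition ind_space ::
  "'g set \<Rightarrow> ('g \<Rightarrow> 'g \<Rightarrow> 'g) \<Rightarrow> 'g set \<Rightarrow> ('y \<Rightarrow> complex) set
     \<Rightarrow> ('g \<Rightarrow> ('y \<Rightarrow> complex) \<Rightarrow> ('y \<Rightarrow> complex)) \<Rightarrow> ('g \<times> 'y \<Rightarrow> complex) set" where
  "ind_space G gmul H W B =
     {f. (\<forall>g\<in>G. (\<lambda>y. f (g, y)) \<in> W) \<and> (\<forall>g y. g \<notin> G \<longrightarrow> f (g, y) = 0) \<and>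
         (\<forall>h\<in>H. \<forall>g\<in>G. (\<lambda>y. f (gmul h g, y)) = B h (\<lambda>y. f (g, y)))}"

definition ind_act ::
  "'g set \<Rightarrow> ('g \<Rightarrow> 'g \<Rightarrow> 'g) \<Rightarrow> 'g \<Rightarrow> ('g \<times> 'y \<Rightarrow> complex) \<Rightarrow> ('g \<times> 'y \<Rightarrow> complex)" where
  "ind_act G gmul g' f = (\<lambda>(g, y). if g \<in> G then f (gmul g g', y) else 0)"

text \<open>Block index of coordinate j for the composition nu (as a list of parts).\<close>
definition block :: "nat list \<Rightarrow> nat \<Rightarrow> nat" where
  "block \<nu> j = (LEAST i. j < sum_list (take (Suc i) \<nu>))"

text \<open>Block-diagonal subgroup (C^x wr S_nu1) x ... x (C^x wr S_nul).\<close>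
definition block_sub :: "nat list \<Rightarrow> mon set" where
  "block_sub \<nu> = {g \<in> mon_grp (sum_list \<nu>). \<forall>j<sum_list \<nu>. block \<nu> (snd g j) = block \<nu> j}"

text \<open>The one-dimensional representation S^((nu_1),w_1) (x) ... (x) S^((nu_l),w_l) of the
  block subgroup: the Specht module of a one-row partition is the trivial representation
  of the symmetric group, and each copy of C^x in the i-th block acts by z |-> z^(w_i).\<close>
definition M_char :: "nat list \<Rightarrow> int list \<Rightarrow> mon \<Rightarrow> complex" where
  "M_char \<nu> w g = (\<Prod>j<sum_list \<nu>. fst g j powi (w ! block \<nu> j))"

definition M_space :: "nat list \<Rightarrow> int list \<Rightarrow> (mon \<times> unit \<Rightarrow> complex) set" where
  "M_space \<nu> w = ind_space (mon_grp (sum_list \<nu>)) mon_mult (block_sub \<nu>) UNIV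
                    (\<lambda>h v. (\<lambda>u. M_char \<nu> w h * v u))"

definition M_act :: "nat list \<Rightarrow> mon \<Rightarrow> (mon \<times> unit \<Rightarrow> complex) \<Rightarrow> (mon \<times> unit \<Rightarrow> complex)" where
  "M_act \<nu> = ind_act (mon_grp (sum_list \<nu>)) mon_mult"

text \<open>Partitions are lists of positive parts; the i-th partition (1-based) gets weight i,
  the leading part n - m gets weight 0 and is omitted if zero.\<close>
definition tM_parts :: "nat \<Rightarrow> nat list list \<Rightarrow> nat list" where
  "tM_parts n lams = (let m = sum_list (map sum_list lams) in
      (if n - m = 0 then [] else [n - m]) @ concat lams)"

definition tM_weights :: "nat \<Rightarrow> nat list list \<Rightarrow> int list" where
  "tM_weights n lams = (let m = sum_list (map sum_list lams) in
      (if n - m = 0 then [] else [0]) @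
      concat (map (\<lambda>i. replicate (length (lams ! i)) (int (Suc i))) [0..<length lams]))"

definition tM_space :: "nat \<Rightarrow> nat list list \<Rightarrow> (mon \<times> unit \<Rightarrow> complex) set" where
  "tM_space n lams = M_space (tM_parts n lams) (tM_weights n lams)"

definition tM_act :: "nat \<Rightarrow> nat list list \<Rightarrow> mon \<Rightarrow> (mon \<times> unit \<Rightarrow> complex) \<Rightarrow> (mon \<times> unit \<Rightarrow> complex)" where
  "tM_act n lams = M_act (tM_parts n lams)"

definition one_row :: "nat \<Rightarrow> nat list" where
  "one_row a = (if a = 0 then [] else [a])"

definition dsum_space ::
  "'a set \<Rightarrow> ('a \<Rightarrow> ('x \<Rightarrow> complex) set) \<Rightarrow> ('a \<times> 'x \<Rightarrow> complex) set" where
  "dsum_space I W = {F. \<forall>a. (\<lambda>x. F (a, x)) \<in> (if a \<in> I then W a else {\<lambda>x. 0})}"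

definition dsum_act ::
  "'a set \<Rightarrow> ('a \<Rightarrow> 'g \<Rightarrow> ('x \<Rightarrow> complex) \<Rightarrow> ('x \<Rightarrow> complex)) \<Rightarrow> 'g
     \<Rightarrow> ('a \<times> 'x \<Rightarrow> complex) \<Rightarrow> ('a \<times> 'x \<Rightarrow> complex)" where
  "dsum_act I A g F = (\<lambda>(a, x). if a \<in> I then A a g (\<lambda>x. F (a, x)) x else 0)"

subsection \<open>The index set A_k^n (a_i stored at list position i-1)\<close>

definition A_set :: "nat \<Rightarrow> nat \<Rightarrow> nat list set" where
  "A_set k n = {a. length a = k \<and> (\<Sum>i<k. Suc i * a ! i) = k \<and> sum_list a \<le> n}"

end

theory Submission
  imports Defs
begin

lemma block_Cons:
  assumes "j < x + sum_list \<nu>"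
  shows "block (x # \<nu>) j = (if j < x then 0 else Suc (block \<nu> (j - x)))"
proof (cases "j < x")
  case True
  have "(LEAST i. j < sum_list (take (Suc i) (x # \<nu>))) = 0" by (rule Least_eq_0) (use True in simp)
  then show ?thesis using True by (simp add: block_def)
next
  case False
  have P: "j < sum_list (take (Suc (length \<nu>)) (x # \<nu>))" using assms by simp
  have "(LEAST i. j < sum_list (take (Suc i) (x # \<nu>))) = Suc (LEAST m. j < sum_list (take (Suc (Suc m)) (x # \<nu>)))"
    by (rule Least_Suc[where P="\<lambda>i. j < sum_list (take (Suc i) (x # \<nu>))", OF P]) (use False in simp)
  also have "(\<lambda>m. j < sum_list (take (Suc (Suc m)) (x # \<nu>))) = (\<lambda>m. j - x < sum_list (take (Suc m) \<nu>))"
    using False by auto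
  finally show ?thesis using False by (simp add: block_def)
qed

lemma block_lt: "j < sum_list \<nu> \<Longrightarrow> block \<nu> j < length \<nu>"
proof (induction \<nu> arbitrary: j)
  case Nil then show ?case by simp
next
  case (Cons x \<nu>)
  show ?case using Cons.prems Cons.IH[of "j - x"] by (simp add: block_Cons)
qed

lemma block_sum: "(\<Sum>j<sum_list \<nu>. f (block \<nu> j)) = (\<Sum>i<length \<nu>. \<nu> ! i * f i)"
proof (induction \<nu> arbitrary: f)
  case Nil then show ?case by simp
next
  case (Cons x \<nu>)
  have "(\<Sum>j<sum_list (x # \<nu>). f (block (x # \<nu>) j)) = (\<Sum>j<x + sum_list \<nu>. (if j < x then f 0 else f (Suc (block \<nu> (j - x)))))"
    by (intro sum.cong) (auto simp: block_Cons)
  also have "\<dots> = (\<Sum>j<x. f 0) + (\<Sum>j<sum_list \<nu>. f (Suc (block \<nu> j)))"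
  proof -
    have "{..<x + sum_list \<nu>} = {..<x} \<union> (\<lambda>j. j + x) ` {..<sum_list \<nu>}"
    proof (intro equalityI subsetI)
      fix j assume "j \<in> {..<x + sum_list \<nu>}"
      then show "j \<in> {..<x} \<union> (\<lambda>j. j + x) ` {..<sum_list \<nu>}"
        by (cases "j < x") (auto simp: image_iff intro!: bexI[of _ "j - x"])
    qed auto
    note U = this
    have "(\<Sum>j<x + sum_list \<nu>. (if j < x then f 0 else f (Suc (block \<nu> (j - x)))))
       = (\<Sum>j\<in>{..<x}. (if j < x then f 0 else f (Suc (block \<nu> (j - x))))) + (\<Sum>j\<in>(\<lambda>j. j + x) ` {..<sum_list \<nu>}. (if j < x then f 0 else f (Suc (block \<nu> (j - x)))))"
      unfolding U by (rule sum.union_disjoint) auto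
    moreover have "(\<Sum>j\<in>(\<lambda>j. j + x) ` {..<sum_list \<nu>}. (if j < x then f 0 else f (Suc (block \<nu> (j - x))))) = (\<Sum>j<sum_list \<nu>. f (Suc (block \<nu> j)))"
      by (subst sum.reindex) (auto simp: inj_on_def)
    ultimately show ?thesis by simp
  qed
  also have "\<dots> = x * f 0 + (\<Sum>i<length \<nu>. \<nu> ! i * f (Suc i))" using Cons.IH[of "\<lambda>i. f (Suc i)"] by simp
  also have "\<dots> = (\<Sum>i<length (x # \<nu>). (x # \<nu>) ! i * f i)" by (simp add: sum.lessThan_Suc_shift del: sum.lessThan_Suc)
  finally show ?case .
qed


definition wts :: "nat list \<Rightarrow> int list" where
  "wts a = concat (map (\<lambda>i. replicate (length (one_row (a ! i))) (int (Suc i))) [0..<length a])"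

lemma SZ: "length xs = length ys \<Longrightarrow> (\<Sum>i<length xs. xs ! i * g (ys ! i)) = sum_list (map (\<lambda>(x,y). x * g y) (zip xs ys))"
proof (induction xs arbitrary: ys)
  case Nil then show ?case by simp
next
  case (Cons x xs) then show ?case by (cases ys) (auto simp: sum.lessThan_Suc_shift simp del: sum.lessThan_Suc)
qed

lemma wts_snoc: "wts (a @ [x]) = wts a @ replicate (length (one_row x)) (int (Suc (length a)))"
proof -
  have "map (\<lambda>i. replicate (length (one_row ((a @ [x]) ! i))) (int (Suc i))) [0..<length a]
      = map (\<lambda>i. replicate (length (one_row (a ! i))) (int (Suc i))) [0..<length a]"
    by (intro map_cong) (auto simp: nth_append)
  note eq = this
  show ?thesis unfolding wts_def length_append_singleton upt_Suc_append[OF le0] map_append concat_append eq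
    by simp
qed

lemma one_row_cases: "one_row x = (if x = 0 then [] else [x])" by (simp add: one_row_def)

lemma wts_len: "length (concat (map one_row a)) = length (wts a)"
proof (induction a rule: rev_induct)
  case Nil then show ?case by (simp add: wts_def)
next
  case (snoc x a) then show ?case by (simp add: wts_snoc one_row_def)
qed

lemma wts_set: "set (wts a) \<subseteq> (\<lambda>i. int (Suc i)) ` {..<length a}"
proof (induction a rule: rev_induct)
  case Nil then show ?case by (simp add: wts_def)
next
  case (snoc x a)
  have "set (wts (a @ [x])) \<subseteq> set (wts a) \<union> {int (Suc (length a))}"
    unfolding wts_snoc by (auto simp: one_row_def)
  also have "\<dots> \<subseteq> (\<lambda>i. int (Suc i)) ` {..<length (a @ [x])}" using snoc by auto
  finally show ?case .
qed

lemma wts_dist: "distinct (wts a)"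
proof (induction a rule: rev_induct)
  case Nil then show ?case by (simp add: wts_def)
next
  case (snoc x a)
  have "int (Suc (length a)) \<notin> set (wts a)" using wts_set[of a] by auto
  then show ?case unfolding wts_snoc using snoc by (simp add: one_row_def)
qed

lemma wts_sum: "sum_list (map (\<lambda>(x,y). x * g y) (zip (concat (map one_row a)) (wts a))) = (\<Sum>i<length a. a ! i * g (int (Suc i)))"
proof (induction a rule: rev_induct)
  case Nil then show ?case by (simp add: wts_def)
next
  case (snoc x a)
  have s: "(\<Sum>i<length (a @ [x]). (a @ [x]) ! i * g (int (Suc i))) = (\<Sum>i<length a. a ! i * g (int (Suc i))) + x * g (int (Suc (length a)))"
    by (simp add: nth_append)
  have c: "concat (map one_row (a @ [x])) = concat (map one_row a) @ one_row x" by simp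
  have z: "zip (concat (map one_row (a @ [x]))) (wts (a @ [x])) = zip (concat (map one_row a)) (wts a) @ zip (one_row x) (replicate (length (one_row x)) (int (Suc (length a))))"
    unfolding c wts_snoc by (rule zip_append) (rule wts_len)
  show ?case unfolding z s using snoc by (cases "x = 0") (simp_all add: one_row_def[of x] one_row_def[of 0])
qed

lemma sum_one_row: "sum_list (map sum_list (map one_row a)) = sum_list a"
  by (induction a) (auto simp: one_row_def)

lemma sum_one_row'[simp]: "sum_list (map (sum_list \<circ> one_row) a) = sum_list a"
  by (induction a) (auto simp: one_row_def)

lemma tw_eq: "tM_weights n (map one_row a) = (if n - sum_list a = 0 then [] else [0]) @ wts a"
proof -
  have "map (\<lambda>i. replicate (length (map one_row a ! i)) (int (Suc i))) [0..<length (map one_row a)]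
      = map (\<lambda>i. replicate (length (one_row (a ! i))) (int (Suc i))) [0..<length a]"
    by (intro map_cong) auto
  note eq = this
  show ?thesis unfolding tM_weights_def Let_def sum_one_row eq wts_def by simp
qed

lemma tp_eq: "tM_parts n (map one_row a) = (if n - sum_list a = 0 then [] else [n - sum_list a]) @ concat (map one_row a)"
  by (simp add: tM_parts_def sum_one_row Let_def)

lemma tp_len: "length (tM_parts n (map one_row a)) = length (tM_weights n (map one_row a))"
  using wts_len[of a] unfolding tp_eq tw_eq by simp

lemma tw_distinct: "distinct (tM_weights n (map one_row a))"
proof -
  have "0 \<notin> set (wts a)" using wts_set[of a] by auto
  then show ?thesis using wts_dist[of a] unfolding tw_eq by simp
qed

lemma tw_nonneg: "x \<in> set (tM_weights n (map one_row a)) \<Longrightarrow> x \<ge> 0"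
proof -
  have "set (wts a) \<subseteq> (\<lambda>i. int (Suc i)) ` {..<length a}" by (rule wts_set)
  then show "x \<in> set (tM_weights n (map one_row a)) \<Longrightarrow> x \<ge> 0" unfolding tw_eq by (auto split: if_splits)
qed

lemma sum_list_concat': "sum_list (concat xss) = sum_list (map sum_list (xss::nat list list))"
  by (induction xss) auto

lemma tp_sum: "sum_list a \<le> n \<Longrightarrow> sum_list (tM_parts n (map one_row a)) = n"
  unfolding tp_eq by (simp add: sum_list_concat' sum_one_row)

lemma tpw_sum:
  "(\<Sum>i<length (tM_parts n (map one_row a)). tM_parts n (map one_row a) ! i * g (tM_weights n (map one_row a) ! i))
    = (n - sum_list a) * g 0 + (\<Sum>i<length a. a ! i * g (int (Suc i)))"
  using wts_sum[of g a] unfolding SZ[OF tp_len] unfolding tp_eq tw_eq using wts_len[of a] by simp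


definition alpha :: "nat \<Rightarrow> nat list \<Rightarrow> nat \<Rightarrow> nat" where
  "alpha n a j = nat (tM_weights n (map one_row a) ! block (tM_parts n (map one_row a)) j)"

definition repl :: "nat \<Rightarrow> (nat \<Rightarrow> nat) \<Rightarrow> nat list" where
  "repl n f = concat (map (\<lambda>j. replicate (f j) j) [0..<n])"

definition std :: "nat \<Rightarrow> nat list \<Rightarrow> nat list" where
  "std n a = repl n (alpha n a)"

lemma repl_count: "count (mset (repl n f)) y = (if y < n then f y else 0)"
  by (induction n) (auto simp: repl_def)

lemma repl_length: "length (repl n f) = (\<Sum>j<n. f j)"
  by (induction n) (auto simp: repl_def)

lemma repl_set: "set (repl n f) \<subseteq> {..<n}"
  by (auto simp: repl_def)

lemma repl_prod: "prod_list (map g (repl n f)) = (\<Prod>j<n. g j ^ f j)"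
  by (induction n) (auto simp: repl_def)

lemma card_sum: "card {j. j < (n::nat) \<and> P j} = (\<Sum>j<n. if P j then 1 else 0)"
proof (induction n)
  case 0 then show ?case by simp
next
  case (Suc n)
  have "{j. j < Suc n \<and> P j} = (if P n then insert n {j. j < n \<and> P j} else {j. j < n \<and> P j})"
    by (auto simp: less_Suc_eq)
  then show ?case using Suc by simp
qed

lemma A_setD: assumes "a \<in> A_set k n"
  shows "length a = k" "(\<Sum>i<k. Suc i * a ! i) = k" "sum_list a \<le> n"
  using assms by (auto simp: A_set_def)

lemma alpha_sum:
  assumes "a \<in> A_set k n" shows "(\<Sum>j<n. alpha n a j) = k"
proof -
  have "(\<Sum>j<n. alpha n a j) = (\<Sum>j<sum_list (tM_parts n (map one_row a)). (\<lambda>i. nat (tM_weights n (map one_row a) ! i)) (block (tM_parts n (map one_row a)) j))"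
    using tp_sum[OF A_setD(3)[OF assms]] by (simp add: alpha_def)
  also have "\<dots> = (n - sum_list a) * nat 0 + (\<Sum>i<length a. a ! i * nat (int (Suc i)))"
    using block_sum[of "\<lambda>i. nat (tM_weights n (map one_row a) ! i)" "tM_parts n (map one_row a)"]
      tpw_sum[of n a "\<lambda>x. nat x"] by simp
  also have "\<dots> = k" using A_setD[OF assms] by (simp add: mult.commute del: of_nat_Suc)
  finally show ?thesis .
qed

lemma alpha_card:
  assumes "a \<in> A_set k n" "v \<ge> 1"
  shows "card {j. j < n \<and> alpha n a j = v} = (if v \<le> k then a ! (v - 1) else 0)"
proof -
  have "card {j. j < n \<and> alpha n a j = v} = (\<Sum>j<sum_list (tM_parts n (map one_row a)). (\<lambda>i. if nat (tM_weights n (map one_row a) ! i) = v then 1 else 0) (block (tM_parts n (map one_row a)) j))"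
    using tp_sum[OF A_setD(3)[OF assms(1)]] by (simp add: alpha_def card_sum)
  also have "\<dots> = (n - sum_list a) * (if nat 0 = v then 1 else 0) + (\<Sum>i<length a. a ! i * (if nat (int (Suc i)) = v then 1 else 0))"
    using block_sum[of "\<lambda>i. if nat (tM_weights n (map one_row a) ! i) = v then 1 else 0" "tM_parts n (map one_row a)"]
      tpw_sum[of n a "\<lambda>x. if nat x = v then 1 else 0"] by simp
  also have "\<dots> = (\<Sum>i<length a. a ! i * (if nat (int (Suc i)) = v then 1 else 0))"
    using assms(2) by simp
  also have "\<dots> = (\<Sum>i<k. if i = v - 1 then a ! i else 0)"
    using A_setD[OF assms(1)] assms(2) by (intro sum.cong) (auto simp del: of_nat_Suc)
  also have "\<dots> = (if v - 1 \<in> {..<k} then a ! (v - 1) else 0)"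
    by (rule sum.delta[OF finite_lessThan])
  also have "\<dots> = (if v \<le> k then a ! (v - 1) else 0)"
    using assms(2) by auto
  finally show ?thesis .
qed

lemma alpha_block:
  assumes "a \<in> A_set k n" "x < n" "y < n" "alpha n a x = alpha n a y"
  shows "block (tM_parts n (map one_row a)) x = block (tM_parts n (map one_row a)) y"
proof -
  let ?p = "tM_parts n (map one_row a)" and ?w = "tM_weights n (map one_row a)"
  have s: "sum_list ?p = n" using tp_sum[OF A_setD(3)[OF assms(1)]] .
  have bx: "block ?p x < length ?w" using block_lt[of x ?p] s assms(2) tp_len by simp
  have by': "block ?p y < length ?w" using block_lt[of y ?p] s assms(3) tp_len by simp
  have "?w ! block ?p x \<ge> 0" "?w ! block ?p y \<ge> 0" using bx by' tw_nonneg nth_mem by blast+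
  then have "?w ! block ?p x = ?w ! block ?p y" using assms(4) by (simp add: alpha_def)
  then show ?thesis using nth_eq_iff_index_eq[OF tw_distinct bx by'] by simp
qed

lemma count_map_inv:
  assumes "\<sigma> permutes {..<n}"
  shows "count (mset (map (inv \<sigma>) L)) y = count (mset L) (\<sigma> y)"
proof -
  have "inv \<sigma> -` {y} = {\<sigma> y}" using permutes_inverses[OF assms] by force
  then have "count (mset (map (inv \<sigma>) L)) y = sum (count (mset L)) ({\<sigma> y} \<inter> set L)"
    by (simp add: count_image_mset)
  also have "\<dots> = count (mset L) (\<sigma> y)"
    by (cases "\<sigma> y \<in> set L") (auto simp: count_eq_zero_iff)
  finally show ?thesis .
qed


definition prof :: "nat \<Rightarrow> nat \<Rightarrow> nat list \<Rightarrow> nat list" where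
  "prof n k is = map (\<lambda>i. card {j. j < n \<and> count (mset is) j = Suc i}) [0..<k]"

lemma swap_lemma:
  fixes n k :: nat
  assumes "\<forall>j<n. \<gamma> j \<le> k"
  shows "(\<Sum>i<k. f i * card {j. j < n \<and> \<gamma> j = Suc i}) = (\<Sum>j<n. if \<gamma> j = 0 then 0 else (f (\<gamma> j - 1) :: nat))"
proof -
  have "(\<Sum>i<k. f i * card {j. j < n \<and> \<gamma> j = Suc i}) = (\<Sum>i<k. \<Sum>j<n. if \<gamma> j = Suc i then f i else 0)"
  proof (intro sum.cong refl)
    fix i
    have "(\<Sum>j<n. if \<gamma> j = Suc i then f i else 0) = (\<Sum>j\<in>{j \<in> {..<n}. \<gamma> j = Suc i}. f i)"
      by (rule sum.inter_filter[symmetric]) simp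
    also have "\<dots> = f i * card {j. j < n \<and> \<gamma> j = Suc i}" by simp
    finally show "f i * card {j. j < n \<and> \<gamma> j = Suc i} = (\<Sum>j<n. if \<gamma> j = Suc i then f i else 0)" by simp
  qed
  also have "\<dots> = (\<Sum>j<n. \<Sum>i<k. if \<gamma> j = Suc i then f i else 0)" by (rule sum.swap)
  also have "\<dots> = (\<Sum>j<n. if \<gamma> j = 0 then 0 else f (\<gamma> j - 1))"
  proof (intro sum.cong refl)
    fix j assume "j \<in> {..<n}"
    then have le: "\<gamma> j \<le> k" using assms by auto
    have "(\<Sum>i<k. if \<gamma> j = Suc i then f i else 0) = (\<Sum>i<k. if i = \<gamma> j - 1 \<and> \<gamma> j \<noteq> 0 then f i else 0)"
      by (intro sum.cong) auto
    also have "\<dots> = (if \<gamma> j = 0 then 0 else f (\<gamma> j - 1))" using le by (auto simp: sum.delta')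
    finally show "(\<Sum>i<k. if \<gamma> j = Suc i then f i else 0) = (if \<gamma> j = 0 then 0 else f (\<gamma> j - 1))" .
  qed
  finally show ?thesis .
qed

lemma sum_count: "set_mset (M :: nat multiset) \<subseteq> {..<n} \<Longrightarrow> (\<Sum>j<n. count M j) = size M"
proof (induction M)
  case empty then show ?case by simp
next
  case (add x M)
  then have "x < n" by auto
  have "(\<Sum>j<n. count (add_mset x M) j) = (\<Sum>j<n. count M j + (if j = x then 1 else 0))"
    by (intro sum.cong) auto
  also have "\<dots> = (\<Sum>j<n. count M j) + 1" using \<open>x < n\<close> by (simp add: sum.distrib)
  finally show ?case using add by simp
qed

lemma idx_count: assumes "is \<in> idx_lists n k"
  shows "(\<Sum>j<n. count (mset is) j) = k" "\<And>j. count (mset is) j \<le> k" "\<And>j. j \<ge> n \<Longrightarrow> count (mset is) j = 0"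
proof -
  have s: "set is \<subseteq> {..<n}" "length is = k" using assms by (auto simp: idx_lists_def)
  show "(\<Sum>j<n. count (mset is) j) = k" using sum_count[of "mset is" n] s by simp
  show "\<And>j. count (mset is) j \<le> k" using s count_le_size[of "mset is"] by simp
  show "\<And>j. j \<ge> n \<Longrightarrow> count (mset is) j = 0" using s by (auto simp: count_eq_zero_iff)
qed

lemma prof_A: assumes "is \<in> idx_lists n k" shows "prof n k is \<in> A_set k n"
proof -
  have le: "\<forall>j<n. count (mset is) j \<le> k" using idx_count(2)[OF assms] by auto
  have 1: "(\<Sum>i<k. Suc i * prof n k is ! i) = k"
  proof -
    have "(\<Sum>i<k. Suc i * prof n k is ! i) = (\<Sum>i<k. Suc i * card {j. j < n \<and> count (mset is) j = Suc i})"
      by (intro sum.cong) (auto simp: prof_def)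
    also have "\<dots> = (\<Sum>j<n. if count (mset is) j = 0 then 0 else Suc (count (mset is) j - 1))"
      by (rule swap_lemma[OF le])
    also have "\<dots> = (\<Sum>j<n. count (mset is) j)" by (intro sum.cong) auto
    finally show ?thesis using idx_count(1)[OF assms] by simp
  qed
  have 2: "sum_list (prof n k is) \<le> n"
  proof -
    have "sum_list (prof n k is) = (\<Sum>i<k. 1 * card {j. j < n \<and> count (mset is) j = Suc i})"
      by (simp add: prof_def sum_list_sum_nth atLeast0LessThan)
    also have "\<dots> = (\<Sum>j<n. if count (mset is) j = 0 then 0 else 1)"
      by (rule swap_lemma[OF le])
    also have "\<dots> \<le> (\<Sum>j<n. 1)" by (intro sum_mono) auto
    finally show ?thesis by simp
  qed
  show ?thesis using 1 2 by (simp add: A_set_def prof_def)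
qed

lemma std_idx: assumes "a \<in> A_set k n" shows "std n a \<in> idx_lists n k"
  using alpha_sum[OF assms] repl_set repl_length by (auto simp: idx_lists_def std_def)

lemma count_std: "count (mset (std n a)) y = (if y < n then alpha n a y else 0)"
  by (simp add: std_def repl_count)

lemma prof_std: assumes "a \<in> A_set k n" "\<sigma> permutes {..<n}"
  shows "prof n k (map (inv \<sigma>) (std n a)) = a"
proof -
  have "card {j. j < n \<and> count (mset (map (inv \<sigma>) (std n a))) j = Suc i} = a ! i" if "i < k" for i
  proof -
    have e1: "{j. j < n \<and> count (mset (map (inv \<sigma>) (std n a))) j = Suc i} = {j. j < n \<and> alpha n a (\<sigma> j) = Suc i}"
    proof (intro Collect_cong)
      fix j
      have "j < n \<Longrightarrow> count (mset (map (inv \<sigma>) (std n a))) j = alpha n a (\<sigma> j)"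
        unfolding count_map_inv[OF assms(2)] count_std using permutes_in_image[OF assms(2), of j] by simp
      then show "(j < n \<and> count (mset (map (inv \<sigma>) (std n a))) j = Suc i) = (j < n \<and> alpha n a (\<sigma> j) = Suc i)"
        by (cases "j < n") simp_all
    qed
    have e2: "\<sigma> ` {j. j < n \<and> alpha n a (\<sigma> j) = Suc i} = {j. j < n \<and> alpha n a j = Suc i}"
    proof (intro equalityI subsetI)
      fix y assume "y \<in> \<sigma> ` {j. j < n \<and> alpha n a (\<sigma> j) = Suc i}"
      then show "y \<in> {j. j < n \<and> alpha n a j = Suc i}" using permutes_in_image[OF assms(2)] by auto
    next
      fix y assume y: "y \<in> {j. j < n \<and> alpha n a j = Suc i}"
      have "inv \<sigma> y < n" using y permutes_in_image[OF permutes_inv[OF assms(2)]] by auto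
      moreover have "\<sigma> (inv \<sigma> y) = y" using permutes_inverses(1)[OF assms(2)] by simp
      ultimately show "y \<in> \<sigma> ` {j. j < n \<and> alpha n a (\<sigma> j) = Suc i}" using y
        by (intro image_eqI[of y _ "inv \<sigma> y"]) auto
    qed
    have "card {j. j < n \<and> count (mset (map (inv \<sigma>) (std n a))) j = Suc i} = card {j. j < n \<and> alpha n a j = Suc i}"
      unfolding e1 e2[symmetric]
      by (rule card_image[symmetric], rule inj_on_subset[OF permutes_inj[OF assms(2)]]) simp
    also have "\<dots> = a ! i" using alpha_card[OF assms(1), of "Suc i"] that by simp
    finally show ?thesis .
  qed
  then have "prof n k (map (inv \<sigma>) (std n a)) = map (\<lambda>i. a ! i) [0..<k]"
    unfolding prof_def by (intro map_cong) auto
  also have "\<dots> = a" using A_setD(1)[OF assms(1)] map_nth[of a] by simp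
  finally show ?thesis .
qed

lemma mset_upt_count: "count (mset (map g [0..<n])) v = card {j. j < n \<and> g j = v}"
proof (induction n)
  case 0 then show ?case by simp
next
  case (Suc n)
  have "{j. j < Suc n \<and> g j = v} = (if g n = v then insert n {j. j < n \<and> g j = v} else {j. j < n \<and> g j = v})"
    by (auto simp: less_Suc_eq)
  then show ?case using Suc by simp
qed

lemma mset_eq_size0:
  fixes X Y :: "nat multiset"
  assumes "size X = size Y" "\<And>v. v \<noteq> 0 \<Longrightarrow> count X v = count Y v"
  shows "X = Y"
proof -
  have f: "filter_mset (\<lambda>v. v \<noteq> 0) X = filter_mset (\<lambda>v. v \<noteq> 0) Y"
    by (rule multiset_eqI) (use assms(2) in auto)
  have "size X = count X 0 + size (filter_mset (\<lambda>v. v \<noteq> 0) X)" for X :: "nat multiset"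
    by (metis add.commute filter_eq_replicate_mset multiset_partition size_replicate_mset size_union)
  then have "count X 0 = count Y 0" using f assms(1) by (metis add_right_cancel)
  then show ?thesis using assms(2) by (intro multiset_eqI) (case_tac x, auto)
qed


lemma idx_finite: "finite (idx_lists n k)"
  using finite_lists_length_eq[of "{..<n}" k] by (simp add: idx_lists_def conj_commute)

lemma mon_grpD: assumes "g \<in> mon_grp n"
  shows "snd g permutes {..<n}" "\<And>j. j < n \<Longrightarrow> fst g j \<noteq> 0" "\<And>j. j \<ge> n \<Longrightarrow> fst g j = 1"
  using assms by (auto simp: mon_grp_def)

lemma map_inv_idx: assumes "\<sigma> permutes {..<n}" "L \<in> idx_lists n k"
  shows "map (inv \<sigma>) L \<in> idx_lists n k"
  using assms permutes_in_image[OF permutes_inv[OF assms(1)]] by (auto simp: idx_lists_def)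

lemma sym_act_formula:
  assumes g: "g \<in> mon_grp n" and L: "L \<in> idx_lists n k"
  shows "sym_act n k g T L = (\<Prod>l<k. fst g (L ! l)) * T (map (inv (snd g)) L)"
proof -
  let ?\<sigma> = "snd g"
  have p: "?\<sigma> permutes {..<n}" using mon_grpD[OF g] by blast
  have lenL: "length L = k" using L by (simp add: idx_lists_def)
  have "(\<Sum>js\<in>idx_lists n k. (\<Prod>l<k. mon_mat g (L ! l) (js ! l)) * T js)
      = (\<Sum>js\<in>idx_lists n k. if js = map (inv ?\<sigma>) L then (\<Prod>l<k. fst g (L ! l)) * T js else 0)"
  proof (intro sum.cong refl)
    fix js assume js: "js \<in> idx_lists n k"
    then have lenj: "length js = k" by (simp add: idx_lists_def)
    have eq: "js = map (inv ?\<sigma>) L \<longleftrightarrow> (\<forall>l<k. L ! l = ?\<sigma> (js ! l))"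
    proof -
      have e: "(js ! l = inv ?\<sigma> (L ! l)) = (L ! l = ?\<sigma> (js ! l))" for l by (metis permutes_inv_eq[OF p])
      have "js = map (inv ?\<sigma>) L \<longleftrightarrow> (\<forall>l<k. js ! l = inv ?\<sigma> (L ! l))" using lenj lenL by (auto simp: list_eq_iff_nth_eq)
      also have "\<dots> \<longleftrightarrow> (\<forall>l<k. L ! l = ?\<sigma> (js ! l))" using e by simp
      finally show ?thesis .
    qed
    show "(\<Prod>l<k. mon_mat g (L ! l) (js ! l)) * T js = (if js = map (inv ?\<sigma>) L then (\<Prod>l<k. fst g (L ! l)) * T js else 0)"
    proof (cases "js = map (inv ?\<sigma>) L")
      case True
      then have "\<forall>l<k. L ! l = ?\<sigma> (js ! l)" using eq by blast
      then have "(\<Prod>l<k. mon_mat g (L ! l) (js ! l)) = (\<Prod>l<k. fst g (L ! l))"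
        by (intro prod.cong) (auto simp: mon_mat_def)
      then show ?thesis using True by simp
    next
      case False
      then obtain l where "l < k" "L ! l \<noteq> ?\<sigma> (js ! l)" using eq by blast
      then have "(\<Prod>l<k. mon_mat g (L ! l) (js ! l)) = 0"
        by (intro prod_zero) (auto simp: mon_mat_def intro!: bexI[of _ l])
      then show ?thesis using False by simp
    qed
  qed
  also have "\<dots> = (\<Prod>l<k. fst g (L ! l)) * T (map (inv ?\<sigma>) L)"
    using map_inv_idx[OF p L] by (subst sum.delta[OF idx_finite]) simp
  finally show ?thesis using L by (simp add: sym_act_def)
qed

lemma mon_mult_closed: assumes "g \<in> mon_grp n" "h \<in> mon_grp n" shows "mon_mult g h \<in> mon_grp n"
proof -
  have pg: "snd g permutes {..<n}" and ph: "snd h permutes {..<n}" using assms mon_grpD by blast+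
  have "\<And>j. j < n \<Longrightarrow> inv (snd g) j < n" using permutes_in_image[OF permutes_inv[OF pg]] by auto
  moreover have "\<And>j. j \<ge> n \<Longrightarrow> inv (snd g) j = j" using permutes_not_in[OF permutes_inv[OF pg]] by auto
  ultimately show ?thesis using assms pg ph permutes_compose[OF ph pg]
    by (auto simp: mon_grp_def mon_mult_def)
qed

lemma prod_nth_list0: "(\<Prod>l<length L. f (L ! l)) = prod_list (map f L)"
  by (induction L) (simp_all add: prod.lessThan_Suc_shift del: prod.lessThan_Suc)

lemma prod_nth_list: "length L = k \<Longrightarrow> (\<Prod>l<k. f (L ! l)) = prod_list (map f L)"
  using prod_nth_list0 by blast

lemma prod_list_mset: "mset L1 = mset L2 \<Longrightarrow> prod_list (map f L1) = prod_list (map (f::_\<Rightarrow>complex) L2)"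
  by (metis mset_map prod_mset_prod_list)

lemma tau_ex: assumes "is \<in> idx_lists n k"
  shows "\<exists>\<tau>. \<tau> permutes {..<n} \<and> mset (map (inv \<tau>) (std n (prof n k is))) = mset is"
proof -
  define a where "a = prof n k is"
  have aA: "a \<in> A_set k n" using prof_A[OF assms] by (simp add: a_def)
  have lena: "length a = k" using A_setD(1)[OF aA] .
  let ?xs = "map (\<lambda>j. count (mset is) j) [0..<n]" and ?ys = "map (alpha n a) [0..<n]"
  have "mset ?xs = mset ?ys"
  proof (rule mset_eq_size0)
    show "size (mset ?xs) = size (mset ?ys)" by simp
  next
    fix v :: nat assume "v \<noteq> 0"
    then have v1: "v \<ge> 1" by simp
    show "count (mset ?xs) v = count (mset ?ys) v"
    proof (cases "v \<le> k")
      case True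
      have "count (mset ?ys) v = a ! (v - 1)" using alpha_card[OF aA v1] True unfolding mset_upt_count by simp
      also have "\<dots> = card {j. j < n \<and> count (mset is) j = Suc (v - 1)}"
      proof -
        have "[0..<k] ! (v - 1) = v - 1" using True v1 by (intro nth_upt[of 0, simplified]) simp
        then show ?thesis using True v1 by (simp add: a_def prof_def)
      qed
      also have "\<dots> = count (mset ?xs) v" using v1 unfolding mset_upt_count by simp
      finally show ?thesis by simp
    next
      case False
      have c1: "card {j. j < n \<and> alpha n a j = v} = 0" using alpha_card[OF aA v1] False by simp
      have c2: "{j. j < n \<and> count (mset is) j = v} = {}" using idx_count(2)[OF assms] False
        by (auto simp: not_le) (metis leD)
      show ?thesis unfolding mset_upt_count c1 c2 by simp
    qed
  qed
  then obtain p where p: "p permutes {..<length ?ys}" "permute_list p ?ys = ?xs"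
    by (rule mset_eq_permutation)
  have pn: "p permutes {..<n}" using p(1) by simp
  have pj: "count (mset is) j = alpha n a (p j)" if "j < n" for j
  proof -
    have "?xs ! j = permute_list p ?ys ! j" using p(2) by simp
    also have "\<dots> = ?ys ! p j" using permute_list_nth[OF p(1)] that by simp
    finally show ?thesis using that permutes_in_image[OF pn, of j] by simp
  qed
  have "mset (map (inv p) (std n a)) = mset is"
  proof (rule multiset_eqI)
    fix y
    show "count (mset (map (inv p) (std n a))) y = count (mset is) y"
    proof (cases "y < n")
      case True
      then show ?thesis unfolding count_map_inv[OF pn] count_std using permutes_in_image[OF pn, of y] pj[OF True] by simp
    next
      case False
      then have "p y = y" using permutes_not_in[OF pn] by simp
      then show ?thesis unfolding count_map_inv[OF pn] count_std using False idx_count(3)[OF assms, of y] by simp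
    qed
  qed
  then show ?thesis using pn by (auto simp: a_def)
qed


definition tau :: "nat \<Rightarrow> nat \<Rightarrow> nat list \<Rightarrow> (nat \<Rightarrow> nat)" where
  "tau n k is = (SOME \<tau>. \<tau> permutes {..<n} \<and> mset (map (inv \<tau>) (std n (prof n k is))) = mset is)"

definition Phi :: "nat \<Rightarrow> nat \<Rightarrow> (nat list \<Rightarrow> complex) \<Rightarrow> nat list \<times> (mon \<times> unit) \<Rightarrow> complex" where
  "Phi n k T = (\<lambda>(a, (g, u)). if a \<in> A_set k n \<and> g \<in> mon_grp n
      then (\<Prod>l<k. fst g (std n a ! l)) * T (map (inv (snd g)) (std n a)) else 0)"

definition Psi :: "nat \<Rightarrow> nat \<Rightarrow> (nat list \<times> (mon \<times> unit) \<Rightarrow> complex) \<Rightarrow> nat list \<Rightarrow> complex" where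
  "Psi n k F = (\<lambda>is. if is \<in> idx_lists n k then F (prof n k is, ((\<lambda>_. 1), tau n k is), ()) else 0)"

lemma tau_spec: assumes "is \<in> idx_lists n k"
  shows "tau n k is permutes {..<n}" "mset (map (inv (tau n k is)) (std n (prof n k is))) = mset is"
  using someI_ex[OF tau_ex[OF assms]] by (auto simp: tau_def)

lemma one_grp: "\<tau> permutes {..<n} \<Longrightarrow> ((\<lambda>_. 1), \<tau>) \<in> mon_grp n"
  by (simp add: mon_grp_def)

lemma idx_mset: assumes m: "mset is = mset js" shows "(is \<in> idx_lists n k) = (js \<in> idx_lists n k)"
proof -
  have "length is = length js" using arg_cong[OF m, of size] by simp
  moreover have "set is = set js" using arg_cong[OF m, of set_mset] by simp
  ultimately show ?thesis by (simp add: idx_lists_def)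
qed

lemma prof_mset: "mset is = mset js \<Longrightarrow> prof n k is = prof n k js"
  unfolding prof_def by (rule arg_cong[where f="\<lambda>M. map (\<lambda>i. card {j. j < n \<and> count M j = Suc i}) [0..<k]"])

lemma tau_mset: assumes "mset is = mset js" shows "tau n k is = tau n k js"
proof -
  have "prof n k is = prof n k js" using assms by (rule prof_mset)
  then show ?thesis unfolding tau_def using assms by metis
qed

lemma symT: "T \<in> sym_space n k \<Longrightarrow> mset is = mset js \<Longrightarrow> T is = T js"
  unfolding sym_space_def by blast

lemma std_len: "a \<in> A_set k n \<Longrightarrow> length (std n a) = k"
  using std_idx by (simp add: idx_lists_def)

lemma M_char_std:
  assumes aA: "a \<in> A_set k n" and h: "h \<in> mon_grp n"
  shows "M_char (tM_parts n (map one_row a)) (tM_weights n (map one_row a)) h = (\<Prod>l<k. fst h (std n a ! l))"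
proof -
  let ?p = "tM_parts n (map one_row a)" and ?w = "tM_weights n (map one_row a)"
  have s: "sum_list ?p = n" using tp_sum[OF A_setD(3)[OF aA]] .
  have w: "?w ! block ?p j = int (alpha n a j)" if "j < n" for j
  proof -
    have "block ?p j < length ?w" using block_lt[of j ?p] s that tp_len by simp
    then have "?w ! block ?p j \<ge> 0" using tw_nonneg nth_mem by blast
    then show ?thesis by (simp add: alpha_def)
  qed
  have "M_char ?p ?w h = (\<Prod>j<n. fst h j ^ alpha n a j)"
    unfolding M_char_def s using w by (intro prod.cong) auto
  also have "\<dots> = prod_list (map (fst h) (std n a))" by (simp add: std_def repl_prod)
  also have "\<dots> = (\<Prod>l<k. fst h (std n a ! l))" by (rule prod_nth_list[OF std_len[OF aA], symmetric])
  finally show ?thesis .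
qed

lemma block_mset:
  assumes aA: "a \<in> A_set k n" and h: "h \<in> block_sub (tM_parts n (map one_row a))"
  shows "mset (map (inv (snd h)) (std n a)) = mset (std n a)"
proof (rule multiset_eqI)
  let ?p = "tM_parts n (map one_row a)"
  have s: "sum_list ?p = n" using tp_sum[OF A_setD(3)[OF aA]] .
  have hg: "h \<in> mon_grp n" and hb: "\<forall>j<n. block ?p (snd h j) = block ?p j" using h s by (auto simp: block_sub_def)
  have p: "snd h permutes {..<n}" using mon_grpD[OF hg] by blast
  fix y
  show "count (mset (map (inv (snd h)) (std n a))) y = count (mset (std n a)) y"
  proof (cases "y < n")
    case True
    then show ?thesis unfolding count_map_inv[OF p] count_std
      using permutes_in_image[OF p, of y] hb by (simp add: alpha_def)
  next
    case False
    then show ?thesis unfolding count_map_inv[OF p] count_std using permutes_not_in[OF p, of y] by simp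
  qed
qed

lemma mset_map_eq: "mset L1 = mset L2 \<Longrightarrow> mset (map f L1) = mset (map f L2)"
  by simp

lemma inv_comp: "\<sigma> permutes {..<n} \<Longrightarrow> \<rho> permutes {..<n} \<Longrightarrow> inv (\<sigma> \<circ> \<rho>) = inv \<rho> \<circ> inv \<sigma>"
  by (simp add: o_inv_distrib permutes_bij)

lemma Phi_mult:
  assumes aA: "a \<in> A_set k n" and g: "g \<in> mon_grp n" and h: "h \<in> mon_grp n"
  shows "Phi n k T (a, (mon_mult g h, u)) = (\<Prod>l<k. fst g (std n a ! l)) *
           ((\<Prod>l<k. fst h (map (inv (snd g)) (std n a) ! l)) * T (map (inv (snd h)) (map (inv (snd g)) (std n a))))"
proof -
  have pg: "snd g permutes {..<n}" and ph: "snd h permutes {..<n}" using g h mon_grpD by blast+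
  have len: "length (std n a) = k" using std_len[OF aA] .
  have e1: "(\<Prod>l<k. fst (mon_mult g h) (std n a ! l)) = (\<Prod>l<k. fst g (std n a ! l)) * (\<Prod>l<k. fst h (map (inv (snd g)) (std n a) ! l))"
    using len by (simp add: mon_mult_def prod.distrib)
  have e2: "map (inv (snd (mon_mult g h))) (std n a) = map (inv (snd h)) (map (inv (snd g)) (std n a))"
    using inv_comp[OF pg ph] by (simp add: mon_mult_def)
  have "Phi n k T (a, (mon_mult g h, u)) = (\<Prod>l<k. fst (mon_mult g h) (std n a ! l)) * T (map (inv (snd (mon_mult g h))) (std n a))"
    using mon_mult_closed[OF g h] aA by (simp add: Phi_def)
  also have "\<dots> = (\<Prod>l<k. fst g (std n a ! l)) * ((\<Prod>l<k. fst h (map (inv (snd g)) (std n a) ! l)) * T (map (inv (snd h)) (map (inv (snd g)) (std n a))))"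
    unfolding e1 e2 by (simp add: mult.assoc)
  finally show ?thesis .
qed


lemma Phi_in:
  assumes T: "T \<in> sym_space n k"
  shows "Phi n k T \<in> dsum_space (A_set k n) (\<lambda>a. tM_space n (map one_row a))"
  unfolding dsum_space_def
proof (intro CollectI allI)
  fix a
  show "(\<lambda>x. Phi n k T (a, x)) \<in> (if a \<in> A_set k n then tM_space n (map one_row a) else {\<lambda>x. 0})"
  proof (cases "a \<in> A_set k n")
    case False
    have "(\<lambda>x. Phi n k T (a, x)) = (\<lambda>x. 0)" using False by (auto simp: Phi_def)
    then show ?thesis using False by simp
  next
    case aA: True
    let ?p = "tM_parts n (map one_row a)" and ?w = "tM_weights n (map one_row a)"
    have s: "sum_list ?p = n" using tp_sum[OF A_setD(3)[OF aA]] .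
    have len: "length (std n a) = k" using std_len[OF aA] .
    have c3: "(\<lambda>y. Phi n k T (a, (mon_mult h g, y))) = (\<lambda>u. M_char ?p ?w h * Phi n k T (a, (g, u)))"
      if h: "h \<in> block_sub ?p" and g: "g \<in> mon_grp n" for h g
    proof
      fix u
      have hg: "h \<in> mon_grp n" using h s by (simp add: block_sub_def)
      have pg: "snd g permutes {..<n}" using mon_grpD[OF g] by blast
      have B: "mset (map (inv (snd h)) (std n a)) = mset (std n a)" using block_mset[OF aA h] .
      have p1: "(\<Prod>l<k. fst g (map (inv (snd h)) (std n a) ! l)) = (\<Prod>l<k. fst g (std n a ! l))"
      proof -
        have "(\<Prod>l<k. fst g (map (inv (snd h)) (std n a) ! l)) = prod_list (map (fst g) (map (inv (snd h)) (std n a)))"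
          by (rule prod_nth_list) (simp add: len)
        also have "\<dots> = prod_list (map (fst g) (std n a))" by (rule prod_list_mset[OF B])
        also have "\<dots> = (\<Prod>l<k. fst g (std n a ! l))" by (rule prod_nth_list[OF len, symmetric])
        finally show ?thesis .
      qed
      have t1: "T (map (inv (snd g)) (map (inv (snd h)) (std n a))) = T (map (inv (snd g)) (std n a))"
        by (rule symT[OF T], rule mset_map_eq[OF B])
      have "Phi n k T (a, (mon_mult h g, u)) = (\<Prod>l<k. fst h (std n a ! l)) *
           ((\<Prod>l<k. fst g (map (inv (snd h)) (std n a) ! l)) * T (map (inv (snd g)) (map (inv (snd h)) (std n a))))"
        by (rule Phi_mult[OF aA hg g])
      also have "\<dots> = M_char ?p ?w h * ((\<Prod>l<k. fst g (std n a ! l)) * T (map (inv (snd g)) (std n a)))"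
        unfolding p1 t1 M_char_std[OF aA hg] ..
      also have "\<dots> = M_char ?p ?w h * Phi n k T (a, (g, u))" using aA g by (simp add: Phi_def)
      finally show "Phi n k T (a, (mon_mult h g, u)) = M_char ?p ?w h * Phi n k T (a, (g, u))" .
    qed
    have c2: "\<forall>g y. g \<notin> mon_grp n \<longrightarrow> Phi n k T (a, (g, y)) = 0" by (simp add: Phi_def)
    show ?thesis using aA c2 c3 s unfolding tM_space_def M_space_def ind_space_def by simp
  qed
qed

lemma Psi_in: "Psi n k F \<in> sym_space n k"
  unfolding sym_space_def
proof (intro CollectI conjI allI impI)
  fix xs assume "xs \<notin> idx_lists n k" then show "Psi n k F xs = 0" by (simp add: Psi_def)
next
  fix xs js :: "nat list" assume m: "mset xs = mset js"
  show "Psi n k F xs = Psi n k F js"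
    unfolding Psi_def idx_mset[OF m] prof_mset[OF m] tau_mset[OF m] ..
qed

lemma Psi_Phi: assumes T: "T \<in> sym_space n k" shows "Psi n k (Phi n k T) = T"
proof
  fix xs
  show "Psi n k (Phi n k T) xs = T xs"
  proof (cases "xs \<in> idx_lists n k")
    case False then show ?thesis using T by (simp add: Psi_def sym_space_def)
  next
    case True
    have aA: "prof n k xs \<in> A_set k n" using prof_A[OF True] .
    have tp: "tau n k xs permutes {..<n}" using tau_spec(1)[OF True] .
    have "Phi n k T (prof n k xs, ((\<lambda>_. 1), tau n k xs), ()) = T (map (inv (tau n k xs)) (std n (prof n k xs)))"
      using aA one_grp[OF tp] by (simp add: Phi_def)
    also have "\<dots> = T xs" by (rule symT[OF T tau_spec(2)[OF True]])
    finally show ?thesis using True by (simp add: Psi_def)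
  qed
qed


lemma Phi_Psi:
  assumes F: "F \<in> dsum_space (A_set k n) (\<lambda>a. tM_space n (map one_row a))"
  shows "Phi n k (Psi n k F) = F"
proof
  fix x :: "nat list \<times> (mon \<times> unit)"
  obtain a g u where x: "x = (a, (g, u))" by (metis prod.exhaust)
  have Fa: "(\<lambda>x. F (a, x)) \<in> (if a \<in> A_set k n then tM_space n (map one_row a) else {\<lambda>x. 0})"
    using F unfolding dsum_space_def by blast
  show "Phi n k (Psi n k F) x = F x"
  proof (cases "a \<in> A_set k n")
    case False
    then have "(\<lambda>x. F (a, x)) = (\<lambda>x. 0)" using Fa by simp
    then have "F (a, (g, u)) = 0" by (metis (mono_tags))
    then show ?thesis using False x by (simp add: Phi_def)
  next
    case aA: True
    let ?p = "tM_parts n (map one_row a)" and ?w = "tM_weights n (map one_row a)"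
    have s: "sum_list ?p = n" using tp_sum[OF A_setD(3)[OF aA]] .
    have FM: "(\<lambda>x. F (a, x)) \<in> ind_space (mon_grp n) mon_mult (block_sub ?p) UNIV (\<lambda>h v. (\<lambda>u. M_char ?p ?w h * v u))"
      using Fa aA s by (simp add: tM_space_def M_space_def)
    have c2: "\<And>g y. g \<notin> mon_grp n \<Longrightarrow> F (a, (g, y)) = 0" using FM unfolding ind_space_def by blast
    have c3: "\<And>h g. h \<in> block_sub ?p \<Longrightarrow> g \<in> mon_grp n \<Longrightarrow> (\<lambda>y. F (a, (mon_mult h g, y))) = (\<lambda>y. M_char ?p ?w h * F (a, (g, y)))"
      using FM unfolding ind_space_def by blast
    show ?thesis
    proof (cases "g \<in> mon_grp n")
      case False
      then show ?thesis using x c2 by (simp add: Phi_def)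
    next
      case g: True
      have pg: "snd g permutes {..<n}" using mon_grpD[OF g] by blast
      define L where "L = map (inv (snd g)) (std n a)"
      have L: "L \<in> idx_lists n k" unfolding L_def by (rule map_inv_idx[OF pg std_idx[OF aA]])
      have pL: "prof n k L = a" unfolding L_def by (rule prof_std[OF aA pg])
      define \<tau> where "\<tau> = tau n k L"
      have tp: "\<tau> permutes {..<n}" using tau_spec(1)[OF L] by (simp add: \<tau>_def)
      have tm: "mset (map (inv \<tau>) (std n a)) = mset L" using tau_spec(2)[OF L] pL by (simp add: \<tau>_def)
      have cnt: "alpha n a (\<tau> y) = alpha n a (snd g y)" if "y < n" for y
      proof -
        have "count (mset (map (inv \<tau>) (std n a))) y = count (mset L) y" using tm by simp
        then have "count (mset (std n a)) (\<tau> y) = count (mset (std n a)) (snd g y)"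
          unfolding L_def count_map_inv[OF tp] count_map_inv[OF pg] .
        then show ?thesis unfolding count_std
          using permutes_in_image[OF tp, of y] permutes_in_image[OF pg, of y] that by simp
      qed
      define h where "h = (fst g, snd g \<circ> inv \<tau>)"
      have ph: "snd h permutes {..<n}" unfolding h_def using permutes_compose[OF permutes_inv[OF tp] pg] by simp
      have hg: "h \<in> mon_grp n" using mon_grpD[OF g] ph unfolding h_def by (simp add: mon_grp_def)
      have hb: "h \<in> block_sub ?p"
      proof -
        have "block ?p (snd h j) = block ?p j" if "j < n" for j
        proof -
          have ij: "inv \<tau> j < n" using permutes_in_image[OF permutes_inv[OF tp]] that by simp
          have "alpha n a (snd h j) = alpha n a j"
            using cnt[OF ij] permutes_inverses(1)[OF tp, of j] by (simp add: h_def)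
          moreover have "snd h j < n" using permutes_in_image[OF ph] that by simp
          ultimately show ?thesis using alpha_block[OF aA _ that] by blast
        qed
        then show ?thesis using hg s by (simp add: block_sub_def)
      qed
      have g1: "((\<lambda>_. 1), \<tau>) \<in> mon_grp n" by (rule one_grp[OF tp])
      have hm: "mon_mult h ((\<lambda>_. 1), \<tau>) = g"
      proof -
        have "snd g \<circ> inv \<tau> \<circ> \<tau> = snd g" using permutes_inv_o(2)[OF tp] by (simp add: comp_assoc)
        then show ?thesis by (simp add: mon_mult_def h_def)
      qed
      have "F (a, (g, u)) = M_char ?p ?w h * F (a, (((\<lambda>_. 1), \<tau>), u))"
        using fun_cong[OF c3[OF hb g1], of u] unfolding hm .
      also have "M_char ?p ?w h = (\<Prod>l<k. fst g (std n a ! l))"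
        using M_char_std[OF aA hg] by (simp add: h_def)
      finally have Fg: "F (a, (g, u)) = (\<Prod>l<k. fst g (std n a ! l)) * F (a, (((\<lambda>_. 1), \<tau>), ()))" by simp
      have "Phi n k (Psi n k F) x = (\<Prod>l<k. fst g (std n a ! l)) * Psi n k F L"
        using x aA g by (simp add: Phi_def L_def)
      also have "Psi n k F L = F (a, (((\<lambda>_. 1), \<tau>), ()))" using L pL by (simp add: Psi_def \<tau>_def)
      finally show ?thesis using Fg x by simp
    qed
  qed
qed

lemma equivariant:
  assumes g': "g' \<in> mon_grp n"
  shows "Phi n k (sym_act n k g' T) = dsum_act (A_set k n) (\<lambda>a. tM_act n (map one_row a)) g' (Phi n k T)"
proof
  fix x :: "nat list \<times> (mon \<times> unit)"
  obtain a g u where x: "x = (a, (g, u))" by (metis prod.exhaust)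
  show "Phi n k (sym_act n k g' T) x = dsum_act (A_set k n) (\<lambda>a. tM_act n (map one_row a)) g' (Phi n k T) x"
  proof (cases "a \<in> A_set k n \<and> g \<in> mon_grp n")
    case False
    then show ?thesis using x by (auto simp: Phi_def dsum_act_def tM_act_def M_act_def ind_act_def tp_sum[OF A_setD(3)])
  next
    case True
    then have aA: "a \<in> A_set k n" and g: "g \<in> mon_grp n" by auto
    have s: "sum_list (tM_parts n (map one_row a)) = n" using tp_sum[OF A_setD(3)[OF aA]] .
    have pg: "snd g permutes {..<n}" using mon_grpD[OF g] by blast
    have L: "map (inv (snd g)) (std n a) \<in> idx_lists n k" by (rule map_inv_idx[OF pg std_idx[OF aA]])
    have "Phi n k (sym_act n k g' T) x = (\<Prod>l<k. fst g (std n a ! l)) * sym_act n k g' T (map (inv (snd g)) (std n a))"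
      using x aA g by (simp add: Phi_def)
    also have "\<dots> = (\<Prod>l<k. fst g (std n a ! l)) * ((\<Prod>l<k. fst g' (map (inv (snd g)) (std n a) ! l)) * T (map (inv (snd g')) (map (inv (snd g)) (std n a))))"
      unfolding sym_act_formula[OF g' L] ..
    also have "\<dots> = Phi n k T (a, (mon_mult g g', u))" by (rule Phi_mult[OF aA g g', symmetric])
    also have "\<dots> = dsum_act (A_set k n) (\<lambda>a. tM_act n (map one_row a)) g' (Phi n k T) x"
      using x aA g s by (simp add: dsum_act_def tM_act_def M_act_def ind_act_def)
    finally show ?thesis .
  qed
qed

lemma Phi_add: "Phi n k (\<lambda>i. x i + y i) = (\<lambda>i. Phi n k x i + Phi n k y i)"
  by (auto simp: Phi_def distrib_left fun_eq_iff split: prod.split)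

lemma Phi_scale: "Phi n k (\<lambda>i. c * x i) = (\<lambda>i. c * Phi n k x i)"
  by (auto simp: Phi_def fun_eq_iff split: prod.split)

theorem proposition3p5:
  fixes n k :: nat
  shows "rep_iso (mon_grp n) (sym_space n k) (sym_act n k)
           (dsum_space (A_set k n) (\<lambda>a. tM_space n (map one_row a)))
           (dsum_act (A_set k n) (\<lambda>a. tM_act n (map one_row a)))"
  unfolding rep_iso_def
proof (intro exI conjI ballI allI)
  show "bij_betw (Phi n k) (sym_space n k) (dsum_space (A_set k n) (\<lambda>a. tM_space n (map one_row a)))"
    by (rule bij_betw_byWitness[where f'="Psi n k"]) (auto simp: Psi_Phi Phi_Psi Phi_in Psi_in)
next
  fix x y show "Phi n k (\<lambda>i. x i + y i) = (\<lambda>i. Phi n k x i + Phi n k y i)" by (rule Phi_add)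
next
  fix x c show "Phi n k (\<lambda>i. c * x i) = (\<lambda>i. c * Phi n k x i)" by (rule Phi_scale)
next
  fix g x assume "g \<in> mon_grp n"
  then show "Phi n k (sym_act n k g x) = dsum_act (A_set k n) (\<lambda>a. tM_act n (map one_row a)) g (Phi n k x)"
    by (rule equivariant)
qed

end
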